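(* Let $\Phi$ be a finite crystallographic root system with simple roots $\Delta$ and Weyl group $W$, let $\Gamma\subseteq\Delta$ with parabolic subgroup $W_\Gamma$, and let $\beta\in\Phi^+_\Gamma$. Then the random variable $\mathcal{X}_\beta$ is the same when considered on $W$ as when considered on $W_\Gamma$, i.e. \[ \frac{|\{w\in W: w(\beta)\in\Phi^-\}|}{|W|}=\frac{|\{w\in W_\Gamma: w(\beta)\in\Phi^-\}|}{|W_\Gamma|}. \]
   Context: $\Phi^+$ are the positive roots and $\Phi^-=-\Phi^+$. $W_\Gamma=\langle s_\alpha:\alpha\in\Gamma\rangle$ and $\Phi^+_\Gamma=\Phi^+\cap\operatorname{span}(\Gamma)$. For a group $G\in\{W,W_\Gamma\}$ with the uniform distribution, $\mathcal{X}_\beta$ is the Bernoulli random variable with $\mathcal{X}_\beta(w)=1$ if $w(\beta)\in\Phi^-$ and $0$ otherwise. *)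

theory Defs
  imports "HOL-Analysis.Analysis"
begin

definition refl :: "'a::euclidean_space \<Rightarrow> 'a \<Rightarrow> 'a" where
  "refl \<alpha> x = x - ((2 * (x \<bullet> \<alpha>)) / (\<alpha> \<bullet> \<alpha>)) *\<^sub>R \<alpha>"

definition crystallographic_root_system :: "'a::euclidean_space set \<Rightarrow> bool" where
  "crystallographic_root_system \<Phi> \<longleftrightarrow>
     finite \<Phi> \<and> 0 \<notin> \<Phi> \<and>
     (\<forall>\<alpha>\<in>\<Phi>. \<forall>c::real. c *\<^sub>R \<alpha> \<in> \<Phi> \<longleftrightarrow> c = 1 \<or> c = -1) \<and>
     (\<forall>\<alpha>\<in>\<Phi>. refl \<alpha> ` \<Phi> = \<Phi>) \<and>
     (\<forall>\<alpha>\<in>\<Phi>. \<forall>\<beta>\<in>\<Phi>. (2 * (\<beta> \<bullet> \<alpha>)) / (\<alpha> \<bullet> \<alpha>) \<in> \<int>)"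

definition nonneg_comb :: "'a::euclidean_space set \<Rightarrow> 'a \<Rightarrow> bool" where
  "nonneg_comb \<Delta> x \<longleftrightarrow> (\<exists>c. (\<forall>\<alpha>\<in>\<Delta>. c \<alpha> \<ge> (0::real)) \<and> x = (\<Sum>\<alpha>\<in>\<Delta>. c \<alpha> *\<^sub>R \<alpha>))"

definition simple_system :: "'a::euclidean_space set \<Rightarrow> 'a set \<Rightarrow> bool" where
  "simple_system \<Phi> \<Delta> \<longleftrightarrow> \<Delta> \<subseteq> \<Phi> \<and> independent \<Delta> \<and>
     (\<forall>\<beta>\<in>\<Phi>. nonneg_comb \<Delta> \<beta> \<or> nonneg_comb \<Delta> (- \<beta>))"

definition pos_roots :: "'a::euclidean_space set \<Rightarrow> 'a set \<Rightarrow> 'a set" where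
  "pos_roots \<Phi> \<Delta> = {\<beta>\<in>\<Phi>. nonneg_comb \<Delta> \<beta>}"

definition neg_roots :: "'a::euclidean_space set \<Rightarrow> 'a set \<Rightarrow> 'a set" where
  "neg_roots \<Phi> \<Delta> = uminus ` pos_roots \<Phi> \<Delta>"

inductive_set refl_group :: "'a::euclidean_space set \<Rightarrow> ('a \<Rightarrow> 'a) set" for S where
  id_in: "id \<in> refl_group S"
| step: "w \<in> refl_group S \<Longrightarrow> \<alpha> \<in> S \<Longrightarrow> refl \<alpha> \<circ> w \<in> refl_group S"

abbreviation weyl_group :: "'a::euclidean_space set \<Rightarrow> ('a \<Rightarrow> 'a) set" where
  "weyl_group \<Phi> \<equiv> refl_group \<Phi>"

end

theory Submission
  imports Defs
begin

lemma refl_linear: "linear (refl a)"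
  unfolding refl_def by (intro linearI) (auto simp: inner_add_left algebra_simps add_divide_distrib diff_divide_distrib)

lemma refl_refl: "a \<noteq> 0 \<Longrightarrow> refl a (refl a x) = x"
  unfolding refl_def by (simp add: inner_diff_left algebra_simps)

lemma refl_self: "a \<noteq> 0 \<Longrightarrow> refl a a = - a"
  unfolding refl_def by (simp add: algebra_simps scaleR_2)

lemma refl_inner: "a \<noteq> 0 \<Longrightarrow> refl a x \<bullet> refl a y = x \<bullet> y"
  unfolding refl_def by (simp add: inner_diff_left inner_diff_right algebra_simps inner_commute power2_eq_square)

lemma refl_diff_span: "refl a x - x \<in> span {a}"
  unfolding refl_def by (simp add: span_base span_scale span_neg)

lemma rg_comp: "w \<in> refl_group S \<Longrightarrow> x \<in> refl_group S \<Longrightarrow> w \<circ> x \<in> refl_group S"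
  by (induction rule: refl_group.induct) (auto simp: comp_assoc intro: refl_group.intros)

lemma rg_refl: "a \<in> S \<Longrightarrow> refl a \<in> refl_group S"
  using refl_group.step[OF refl_group.id_in] by simp

lemma rg_mono: "w \<in> refl_group S \<Longrightarrow> S \<subseteq> T \<Longrightarrow> w \<in> refl_group T"
  by (induction rule: refl_group.induct) (auto intro: refl_group.intros)

lemma rg_linear: "w \<in> refl_group S \<Longrightarrow> linear w"
proof (induction rule: refl_group.induct)
  case id_in show ?case by (rule linear_id)
next
  case (step w a) show ?case using linear_compose[OF step.IH refl_linear] .
qed

lemma rg_inv_ex: "w \<in> refl_group S \<Longrightarrow> 0 \<notin> S \<Longrightarrow> \<exists>w'\<in>refl_group S. w' \<circ> w = id \<and> w \<circ> w' = id"
proof (induction rule: refl_group.induct)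
  case id_in
  then show ?case by (metis refl_group.id_in id_comp)
next
  case (step w a)
  then obtain w' where w': "w' \<in> refl_group S" "w' \<circ> w = id" "w \<circ> w' = id" by blast
  have a0: "a \<noteq> 0" using step by auto
  have "w' \<circ> refl a \<in> refl_group S" using w' step rg_comp rg_refl by blast
  moreover have "(w' \<circ> refl a) \<circ> (refl a \<circ> w) = id"
    using w' a0 by (auto simp: fun_eq_iff refl_refl)
  moreover have "(refl a \<circ> w) \<circ> (w' \<circ> refl a) = id"
    using w' a0 by (auto simp: fun_eq_iff refl_refl)
  ultimately show ?case by blast
qed

lemma rg_inv: assumes "w \<in> refl_group S" "0 \<notin> S"
  shows "inv w \<in> refl_group S" "inv w \<circ> w = id" "w \<circ> inv w = id"
proof -
  obtain w' where w': "w' \<in> refl_group S" "w' \<circ> w = id" "w \<circ> w' = id" using rg_inv_ex[OF assms] by auto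
  then have "inv w = w'" by (simp add: inv_unique_comp)
  then show "inv w \<in> refl_group S" "inv w \<circ> w = id" "w \<circ> inv w = id" using w' by auto
qed

lemma rg_inner: "w \<in> refl_group S \<Longrightarrow> 0 \<notin> S \<Longrightarrow> w x \<bullet> w y = x \<bullet> y"
  by (induction rule: refl_group.induct) (auto, metis refl_inner)

lemma rg_span: "w \<in> refl_group S \<Longrightarrow> w x - x \<in> span S"
proof (induction rule: refl_group.induct)
  case id_in
  then show ?case by (simp add: span_zero)
next
  case (step w a)
  have "refl a (w x) - w x \<in> span S"
    using refl_diff_span[of a "w x"] span_mono[of "{a}" S] step by auto
  then have "(refl a (w x) - w x) + (w x - x) \<in> span S" using step span_add by blast
  then show ?case by simp
qed

lemma rg_pres: "w \<in> refl_group S \<Longrightarrow> (\<forall>a\<in>S. refl a ` P \<subseteq> P) \<Longrightarrow> x \<in> P \<Longrightarrow> w x \<in> P"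
  by (induction arbitrary: x rule: refl_group.induct) auto

lemma rg_fix_id:
  assumes "w \<in> refl_group S" "0 \<notin> S" "\<forall>x\<in>S. w x = x"
  shows "w = id"
proof
  fix x
  let ?d = "w x - x"
  have "?d \<bullet> y = 0" if "y \<in> S" for y
  proof -
    have "w x \<bullet> w y = x \<bullet> y" using rg_inner assms by blast
    then show ?thesis using assms that by (simp add: inner_diff_left)
  qed
  then have "?d \<bullet> y = 0" if "y \<in> span S" for y
    using orthogonal_to_span[OF that, of ?d] by (auto simp: orthogonal_def)
  from this[OF rg_span[OF assms(1), of x]] show "w x = id x" by (simp del: inner_diff_left inner_diff_right)
qed

lemma rg_finite:
  assumes "finite S" "0 \<notin> S" "\<forall>a\<in>S. refl a ` S \<subseteq> S"
  shows "finite (refl_group S)"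
proof -
  have "inj_on (\<lambda>w. restrict w S) (refl_group S)"
  proof (rule inj_onI)
    fix w1 w2 assume w: "w1 \<in> refl_group S" "w2 \<in> refl_group S" "restrict w1 S = restrict w2 S"
    then have eq: "\<forall>x\<in>S. w1 x = w2 x" by (metis restrict_apply')
    have "inv w2 \<circ> w1 \<in> refl_group S" using rg_inv rg_comp w assms by blast
    moreover have "\<forall>x\<in>S. (inv w2 \<circ> w1) x = x"
      using eq rg_inv(2)[OF w(2) assms(2)] by (metis comp_apply id_apply)
    ultimately have "inv w2 \<circ> w1 = id" using rg_fix_id assms by blast
    then have "w2 \<circ> (inv w2 \<circ> w1) = w2" by simp
    then show "w1 = w2" using rg_inv(3)[OF w(2) assms(2)] by (simp add: comp_assoc[symmetric])
  qed
  moreover have "(\<lambda>w. restrict w S) ` refl_group S \<subseteq> S \<rightarrow>\<^sub>E S"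
    using rg_pres[of _ S S] assms by auto
  moreover have "finite (S \<rightarrow>\<^sub>E S)" using assms by (simp add: finite_PiE)
  ultimately show ?thesis by (meson finite_imageD finite_subset)
qed


locale RS =
  fixes \<Phi> \<Delta> :: "'a::euclidean_space set"
  assumes crs: "crystallographic_root_system \<Phi>"
    and ss: "simple_system \<Phi> \<Delta>"
begin

lemma finPhi: "finite \<Phi>" and zPhi: "0 \<notin> \<Phi>"
  and multPhi: "\<alpha>\<in>\<Phi> \<Longrightarrow> c *\<^sub>R \<alpha> \<in> \<Phi> \<longleftrightarrow> c = 1 \<or> c = -1"
  and reflPhi: "\<alpha>\<in>\<Phi> \<Longrightarrow> refl \<alpha> ` \<Phi> = \<Phi>"
  using crs unfolding crystallographic_root_system_def by auto

lemma DPhi: "\<Delta> \<subseteq> \<Phi>" and indD: "independent \<Delta>"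
  and posneg: "\<beta>\<in>\<Phi> \<Longrightarrow> nonneg_comb \<Delta> \<beta> \<or> nonneg_comb \<Delta> (- \<beta>)"
  using ss unfolding simple_system_def by auto

lemma finD: "finite \<Delta>" using indD independent_explicit by blast

lemma uniq:
  assumes "(\<Sum>v\<in>\<Delta>. c v *\<^sub>R v) = (\<Sum>v\<in>\<Delta>. d v *\<^sub>R v)" "v \<in> \<Delta>"
  shows "c v = d v"
proof -
  have "(\<Sum>v\<in>\<Delta>. (c v - d v) *\<^sub>R v) = 0"
    using assms by (simp add: scaleR_diff_left sum_subtractf)
  then show ?thesis using indD assms(2) unfolding independent_explicit by auto
qed

lemma nn_zero: "nonneg_comb \<Delta> 0"
  unfolding nonneg_comb_def by (rule exI[of _ "\<lambda>_. 0"]) auto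

lemma nn_add: "nonneg_comb \<Delta> x \<Longrightarrow> nonneg_comb \<Delta> y \<Longrightarrow> nonneg_comb \<Delta> (x + y)"
  unfolding nonneg_comb_def
  apply (elim exE conjE)
  subgoal for c d by (rule exI[of _ "\<lambda>a. c a + d a"]) (auto simp: scaleR_add_left sum.distrib)
  done

lemma nn_scale: "nonneg_comb \<Delta> x \<Longrightarrow> (r::real) \<ge> 0 \<Longrightarrow> nonneg_comb \<Delta> (r *\<^sub>R x)"
  unfolding nonneg_comb_def
  apply (elim exE conjE)
  subgoal for c by (rule exI[of _ "\<lambda>a. r * c a"]) (auto simp: scaleR_sum_right)
  done

lemma nn_sum: "finite A \<Longrightarrow> (\<And>a. a \<in> A \<Longrightarrow> nonneg_comb \<Delta> (f a)) \<Longrightarrow> nonneg_comb \<Delta> (sum f A)"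
  by (induction rule: finite_induct) (auto intro: nn_zero nn_add)

lemma nn_both: "nonneg_comb \<Delta> x \<Longrightarrow> nonneg_comb \<Delta> (- x) \<Longrightarrow> x = 0"
proof -
  assume a: "nonneg_comb \<Delta> x" "nonneg_comb \<Delta> (- x)"
  then obtain c d where c: "\<forall>a\<in>\<Delta>. c a \<ge> 0" "x = (\<Sum>a\<in>\<Delta>. c a *\<^sub>R a)"
    and d: "\<forall>a\<in>\<Delta>. d a \<ge> 0" "- x = (\<Sum>a\<in>\<Delta>. d a *\<^sub>R a)"
    unfolding nonneg_comb_def by blast
  have "(\<Sum>a\<in>\<Delta>. (- d a) *\<^sub>R a) = - (\<Sum>a\<in>\<Delta>. d a *\<^sub>R a)"
    by (simp add: sum_negf)
  then have eqn: "(\<Sum>a\<in>\<Delta>. c a *\<^sub>R a) = (\<Sum>a\<in>\<Delta>. (- d a) *\<^sub>R a)"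
    using c(2) d(2) by (metis minus_minus)
  have "\<forall>a\<in>\<Delta>. c a = - d a" using uniq[of c "\<lambda>a. - d a", OF eqn] by blast
  then have "\<forall>a\<in>\<Delta>. c a = 0" using c d by force
  then show "x = 0" using c by simp
qed

lemma negPhi: "\<beta> \<in> \<Phi> \<Longrightarrow> - \<beta> \<in> \<Phi>"
  using multPhi[of \<beta> "-1"] by simp

abbreviation "pos \<equiv> pos_roots \<Phi> \<Delta>"
abbreviation "neg \<equiv> neg_roots \<Phi> \<Delta>"

lemma neg_iff: "x \<in> neg \<longleftrightarrow> x \<in> \<Phi> \<and> nonneg_comb \<Delta> (- x)"
proof
  assume "x \<in> neg"
  then obtain y where "y \<in> \<Phi>" "nonneg_comb \<Delta> y" "x = - y" unfolding neg_roots_def pos_roots_def by blast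
  then show "x \<in> \<Phi> \<and> nonneg_comb \<Delta> (- x)" using negPhi by simp
next
  assume a: "x \<in> \<Phi> \<and> nonneg_comb \<Delta> (- x)"
  then have "- x \<in> pos" unfolding pos_roots_def using negPhi by blast
  then show "x \<in> neg" unfolding neg_roots_def by (metis image_eqI minus_minus)
qed

lemma pos_iff: "x \<in> pos \<longleftrightarrow> x \<in> \<Phi> \<and> nonneg_comb \<Delta> x"
  unfolding pos_roots_def by auto

lemma pos_neg_disj: "x \<in> pos \<Longrightarrow> x \<in> neg \<Longrightarrow> False"
  using nn_both zPhi by (auto simp: pos_iff neg_iff)

lemma pos_or_neg: "x \<in> \<Phi> \<Longrightarrow> x \<in> pos \<or> x \<in> neg"
  using posneg by (auto simp: pos_iff neg_iff)

lemma neg_uminus: "x \<in> neg \<longleftrightarrow> - x \<in> pos"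
  unfolding pos_iff neg_iff by (metis minus_minus negPhi)

lemma rg_Phi: "S \<subseteq> \<Phi> \<Longrightarrow> w \<in> refl_group S \<Longrightarrow> x \<in> \<Phi> \<Longrightarrow> w x \<in> \<Phi>"
  using rg_pres[of w S \<Phi> x] reflPhi by blast

lemma pos_Gamma:
  assumes G: "\<Gamma> \<subseteq> \<Delta>" and g: "\<gamma> \<in> pos" "\<gamma> \<in> span \<Gamma>"
  shows "\<exists>c. (\<forall>a\<in>\<Gamma>. c a \<ge> (0::real)) \<and> \<gamma> = (\<Sum>a\<in>\<Gamma>. c a *\<^sub>R a)"
proof -
  obtain c where c: "\<forall>a\<in>\<Delta>. c a \<ge> 0" "\<gamma> = (\<Sum>a\<in>\<Delta>. c a *\<^sub>R a)"
    using g unfolding pos_iff nonneg_comb_def by blast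
  have fG: "finite \<Gamma>" using G finD finite_subset by blast
  obtain e where e: "\<gamma> = (\<Sum>a\<in>\<Gamma>. e a *\<^sub>R a)" using g(2) span_finite[OF fG] by auto
  define e' where "e' a = (if a \<in> \<Gamma> then e a else 0)" for a
  have "(\<Sum>a\<in>\<Delta>. e' a *\<^sub>R a) = (\<Sum>a\<in>\<Gamma>. e' a *\<^sub>R a)"
    using G finD by (intro sum.mono_neutral_right) (auto simp: e'_def)
  also have "\<dots> = \<gamma>" using e by (simp add: e'_def)
  finally have "\<forall>a\<in>\<Delta>. c a = e' a" using uniq[of c e'] c(2) by metis
  then have z: "\<forall>a\<in>\<Delta>-\<Gamma>. c a = 0" by (simp add: e'_def)
  have "(\<Sum>a\<in>\<Gamma>. c a *\<^sub>R a) = (\<Sum>a\<in>\<Delta>. c a *\<^sub>R a)"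
    by (rule sum.mono_neutral_left[OF finD G]) (use z in auto)
  then have "\<gamma> = (\<Sum>a\<in>\<Gamma>. c a *\<^sub>R a)" using c(2) by simp
  then show ?thesis using c(1) G by blast
qed

lemma L4:
  assumes G: "\<Gamma> \<subseteq> \<Delta>" and u: "linear u" "\<forall>x\<in>\<Phi>. u x \<in> \<Phi>" "\<forall>a\<in>\<Gamma>. u a \<in> pos"
    and g: "\<gamma> \<in> pos" "\<gamma> \<in> span \<Gamma>"
  shows "u \<gamma> \<in> pos"
proof -
  obtain c where c: "\<forall>a\<in>\<Gamma>. c a \<ge> 0" "\<gamma> = (\<Sum>a\<in>\<Gamma>. c a *\<^sub>R a)"
    using pos_Gamma[OF G g] by blast
  have fG: "finite \<Gamma>" using G finD finite_subset by blast
  have "u \<gamma> = (\<Sum>a\<in>\<Gamma>. c a *\<^sub>R u a)"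
    using c(2) u(1) by (simp add: linear_sum linear_scale)
  moreover have "nonneg_comb \<Delta> (\<Sum>a\<in>\<Gamma>. c a *\<^sub>R u a)"
    using fG c(1) u(3) by (intro nn_sum nn_scale) (auto simp: pos_iff)
  moreover have "u \<gamma> \<in> \<Phi>" using u(2) g(1) by (auto simp: pos_iff)
  ultimately show ?thesis by (simp add: pos_iff)
qed
end

context RS begin

lemma simple_pos: "a \<in> \<Delta> \<Longrightarrow> a \<in> pos"
  unfolding pos_iff nonneg_comb_def using DPhi finD
  by (auto intro!: exI[of _ "\<lambda>b. if b = a then 1 else 0"] simp: if_distrib[of "\<lambda>r. r *\<^sub>R _"] cong: if_cong)

lemma L5:
  assumes a: "a \<in> \<Delta>" and g: "\<gamma> \<in> pos" "\<gamma> \<noteq> a"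
  shows "refl a \<gamma> \<in> pos"
proof (rule ccontr)
  assume np: "refl a \<gamma> \<notin> pos"
  have aPhi: "a \<in> \<Phi>" using a DPhi by blast
  have a0: "a \<noteq> 0" using aPhi zPhi by blast
  have gPhi: "\<gamma> \<in> \<Phi>" using g pos_iff by blast
  have "refl a \<gamma> \<in> \<Phi>" using reflPhi[OF aPhi] gPhi by blast
  then have "refl a \<gamma> \<in> neg" using np pos_or_neg by blast
  then obtain e where e: "\<forall>b\<in>\<Delta>. e b \<ge> 0" "- refl a \<gamma> = (\<Sum>b\<in>\<Delta>. e b *\<^sub>R b)"
    unfolding neg_iff nonneg_comb_def by blast
  obtain c where c: "\<forall>b\<in>\<Delta>. c b \<ge> 0" "\<gamma> = (\<Sum>b\<in>\<Delta>. c b *\<^sub>R b)"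
    using g unfolding pos_iff nonneg_comb_def by blast
  define k where "k = (2 * (\<gamma> \<bullet> a)) / (a \<bullet> a)"
  define c' where "c' b = c b - (if b = a then k else 0)" for b
  have "(\<Sum>b\<in>\<Delta>. c' b *\<^sub>R b) = (\<Sum>b\<in>\<Delta>. c b *\<^sub>R b) - (\<Sum>b\<in>\<Delta>. (if b = a then k else 0) *\<^sub>R b)"
    unfolding c'_def by (simp add: scaleR_diff_left sum_subtractf)
  also have "(\<Sum>b\<in>\<Delta>. (if b = a then k else 0) *\<^sub>R b) = k *\<^sub>R a"
    using a finD by (simp add: if_distrib[of "\<lambda>r. r *\<^sub>R _"] cong: if_cong)
  finally have r1: "refl a \<gamma> = (\<Sum>b\<in>\<Delta>. c' b *\<^sub>R b)"
    using c(2) unfolding refl_def k_def by simp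
  have "(\<Sum>b\<in>\<Delta>. (- e b) *\<^sub>R b) = - (\<Sum>b\<in>\<Delta>. e b *\<^sub>R b)" by (simp add: sum_negf)
  then have eqn: "(\<Sum>b\<in>\<Delta>. c' b *\<^sub>R b) = (\<Sum>b\<in>\<Delta>. (- e b) *\<^sub>R b)"
    using r1 e(2) by (metis minus_minus)
  have ce: "\<forall>b\<in>\<Delta>. c' b = - e b" using uniq[of c' "\<lambda>b. - e b", OF eqn] by blast
  have z: "\<forall>b\<in>\<Delta>. b \<noteq> a \<longrightarrow> c b = 0"
  proof (intro ballI impI)
    fix b assume "b \<in> \<Delta>" "b \<noteq> a"
    then show "c b = 0" using ce c(1) e(1) unfolding c'_def by force
  qed
  have "\<gamma> = (\<Sum>b\<in>\<Delta>. (if b = a then c a else 0) *\<^sub>R b)"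
    using c(2) z by (intro trans[OF c(2)] sum.cong) auto
  also have "\<dots> = c a *\<^sub>R a"
    using a finD by (simp add: if_distrib[of "\<lambda>r. r *\<^sub>R _"] cong: if_cong)
  finally have ga: "\<gamma> = c a *\<^sub>R a" .
  then have "c a = 1 \<or> c a = -1" using multPhi[OF aPhi] gPhi by simp
  moreover have "c a \<ge> 0" using c(1) a by blast
  ultimately have "c a = 1" by linarith
  then show False using ga g(2) by simp
qed

lemma exists_R:
  assumes G: "\<Gamma> \<subseteq> \<Delta>" and w: "w \<in> refl_group \<Phi>"
  shows "\<exists>v\<in>refl_group \<Gamma>. \<forall>\<gamma>\<in>pos \<inter> span \<Gamma>. (w \<circ> v) \<gamma> \<in> pos"
proof -
  have GPhi: "\<Gamma> \<subseteq> \<Phi>" using G DPhi by blast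
  have G0: "0 \<notin> \<Gamma>" using GPhi zPhi by blast
  define N where "N u = card {\<gamma> \<in> pos \<inter> span \<Gamma>. u \<gamma> \<in> neg}" for u :: "'a \<Rightarrow> 'a"
  have finS: "finite {\<gamma> \<in> pos \<inter> span \<Gamma>. u \<gamma> \<in> neg}" for u
    using finPhi by (rule finite_subset[rotated]) (auto simp: pos_iff)
  have "\<forall>v\<in>refl_group \<Gamma>. N (w \<circ> v) = n \<longrightarrow> (\<exists>v'\<in>refl_group \<Gamma>. \<forall>\<gamma>\<in>pos \<inter> span \<Gamma>. (w \<circ> v') \<gamma> \<in> pos)" for n
  proof (induction n rule: less_induct)
    case (less n)
    show ?case
    proof (intro ballI impI)
      fix v assume v: "v \<in> refl_group \<Gamma>" and Nn: "N (w \<circ> v) = n"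
      define u where "u = w \<circ> v"
      have uW: "u \<in> refl_group \<Phi>" unfolding u_def using rg_comp w rg_mono[OF v GPhi] by blast
      have ul: "linear u" using rg_linear[OF uW] .
      have uP: "\<forall>x\<in>\<Phi>. u x \<in> \<Phi>" using rg_Phi[OF _ uW] by blast
      show "\<exists>v'\<in>refl_group \<Gamma>. \<forall>\<gamma>\<in>pos \<inter> span \<Gamma>. (w \<circ> v') \<gamma> \<in> pos"
      proof (cases "\<forall>\<gamma>\<in>pos \<inter> span \<Gamma>. u \<gamma> \<in> pos")
        case True
        then show ?thesis using v unfolding u_def by blast
      next
        case False
        then have "\<not> (\<forall>a\<in>\<Gamma>. u a \<in> pos)" using L4[OF G ul uP] by blast
        then obtain a where aG: "a \<in> \<Gamma>" and ua: "u a \<notin> pos" by blast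
        have aD: "a \<in> \<Delta>" using aG G by blast
        have aPhi: "a \<in> \<Phi>" using aD DPhi by blast
        have a0: "a \<noteq> 0" using aPhi zPhi by blast
        have uan: "u a \<in> neg" using ua pos_or_neg uP aPhi by blast
        have apos: "a \<in> pos" using simple_pos[OF aD] .
        define v' where "v' = v \<circ> refl a"
        have v': "v' \<in> refl_group \<Gamma>" unfolding v'_def using rg_comp[OF v rg_refl[OF aG]] .
        define S where "S = {\<gamma> \<in> pos \<inter> span \<Gamma>. u \<gamma> \<in> neg}"
        define S' where "S' = {\<gamma> \<in> pos \<inter> span \<Gamma>. (w \<circ> v') \<gamma> \<in> neg}"
        have aS: "a \<in> S" unfolding S_def using apos uan aG span_base by blast
        have "S' \<subseteq> refl a ` (S - {a})"
        proof
          fix \<gamma> assume "\<gamma> \<in> S'"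
          then have g: "\<gamma> \<in> pos" "\<gamma> \<in> span \<Gamma>" "u (refl a \<gamma>) \<in> neg"
            unfolding S'_def v'_def u_def by auto
          have "\<gamma> \<noteq> a"
          proof
            assume "\<gamma> = a"
            then have "u (refl a \<gamma>) = - u a" using refl_self[OF a0] linear_neg[OF ul] by simp
            then show False using g(3) uan neg_uminus pos_neg_disj by metis
          qed
          then have g'p: "refl a \<gamma> \<in> pos" using L5[OF aD g(1)] by blast
          have "refl a \<gamma> - \<gamma> \<in> span \<Gamma>"
            using refl_diff_span[of a \<gamma>] span_mono[of "{a}" \<Gamma>] aG by blast
          then have g's: "refl a \<gamma> \<in> span \<Gamma>" using span_add[OF _ g(2)] by fastforce
          have "refl a \<gamma> \<noteq> a"
          proof
            assume "refl a \<gamma> = a"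
            then have "\<gamma> = - a" using refl_refl[OF a0, of \<gamma>] refl_self[OF a0] by metis
            then show False using g(1) apos neg_uminus pos_neg_disj by (metis minus_minus)
          qed
          then have "refl a \<gamma> \<in> S - {a}" unfolding S_def using g'p g's g(3) by blast
          moreover have "\<gamma> = refl a (refl a \<gamma>)" using refl_refl[OF a0] by simp
          ultimately show "\<gamma> \<in> refl a ` (S - {a})" by blast
        qed
        then have "card S' \<le> card (S - {a})"
          using finS unfolding S_def by (meson card_image_le card_mono finite_Diff finite_imageI order_trans)
        also have "\<dots> < card S" using card_Diff1_less[OF _ aS] finS unfolding S_def by blast
        finally have "N (w \<circ> v') < n" unfolding N_def S'_def using Nn N_def S_def u_def by simp
        then obtain v'' where "v'' \<in> refl_group \<Gamma>" "\<forall>\<gamma>\<in>pos \<inter> span \<Gamma>. (w \<circ> v'') \<gamma> \<in> pos"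
          using less.IH v' by blast
        then show ?thesis by blast
      qed
    qed
  qed
  then show ?thesis using refl_group.id_in[of \<Gamma>] by (metis comp_id)
qed

end


context RS begin

lemma key:
  assumes G: "\<Gamma> \<subseteq> \<Delta>" and b: "\<beta> \<in> pos" "\<beta> \<in> span \<Gamma>" and w: "w \<in> refl_group \<Phi>"
  shows "card {v \<in> refl_group \<Gamma>. w (v \<beta>) \<in> neg} = card {x \<in> refl_group \<Gamma>. x \<beta> \<in> neg}"
proof -
  have GPhi: "\<Gamma> \<subseteq> \<Phi>" using G DPhi by blast
  have G0: "0 \<notin> \<Gamma>" using GPhi zPhi by blast
  obtain v0 where v0: "v0 \<in> refl_group \<Gamma>" and good: "\<forall>\<gamma>\<in>pos \<inter> span \<Gamma>. (w \<circ> v0) \<gamma> \<in> pos"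
    using exists_R[OF G w] by blast
  define u where "u = w \<circ> v0"
  have uW: "u \<in> refl_group \<Phi>" unfolding u_def using rg_comp w rg_mono[OF v0 GPhi] by blast
  have ul: "linear u" using rg_linear[OF uW] .
  have bPhi: "\<beta> \<in> \<Phi>" using b pos_iff by blast
  have iff: "u (x \<beta>) \<in> neg \<longleftrightarrow> x \<beta> \<in> neg" if x: "x \<in> refl_group \<Gamma>" for x
  proof -
    have yPhi: "x \<beta> \<in> \<Phi>" using rg_Phi[OF GPhi x bPhi] .
    have "x \<beta> - \<beta> \<in> span \<Gamma>" using rg_span[OF x] .
    then have ys: "x \<beta> \<in> span \<Gamma>" using span_add[OF _ b(2)] by fastforce
    show ?thesis
    proof (cases "x \<beta> \<in> pos")
      case True
      then have "u (x \<beta>) \<in> pos" using good ys unfolding u_def by blast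
      then show ?thesis using True pos_neg_disj by blast
    next
      case False
      then have yn: "x \<beta> \<in> neg" using pos_or_neg yPhi by blast
      then have "- x \<beta> \<in> pos" using neg_uminus by blast
      moreover have "- x \<beta> \<in> span \<Gamma>" using ys span_neg by blast
      ultimately have "u (- x \<beta>) \<in> pos" using good unfolding u_def by blast
      then have "u (x \<beta>) \<in> neg" using linear_neg[OF ul] neg_uminus by (metis minus_minus)
      then show ?thesis using yn by blast
    qed
  qed
  have inv0: "inv v0 \<in> refl_group \<Gamma>" "inv v0 \<circ> v0 = id" "v0 \<circ> inv v0 = id"
    using rg_inv[OF v0 G0] by auto
  have winv: "w (v \<beta>) = u ((inv v0 \<circ> v) \<beta>)" for v
    using inv0(3) unfolding u_def by (metis comp_apply id_apply)
  have "bij_betw (\<lambda>v. inv v0 \<circ> v) {v \<in> refl_group \<Gamma>. w (v \<beta>) \<in> neg} {x \<in> refl_group \<Gamma>. x \<beta> \<in> neg}"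
  proof (rule bij_betw_byWitness[where f' = "\<lambda>x. v0 \<circ> x"])
    show "\<forall>a\<in>{v \<in> refl_group \<Gamma>. w (v \<beta>) \<in> neg}. v0 \<circ> (inv v0 \<circ> a) = a"
      using inv0(3) by (simp add: comp_assoc[symmetric])
    show "\<forall>a'\<in>{x \<in> refl_group \<Gamma>. x \<beta> \<in> neg}. inv v0 \<circ> (v0 \<circ> a') = a'"
      using inv0(2) by (simp add: comp_assoc[symmetric])
    show "(\<lambda>v. inv v0 \<circ> v) ` {v \<in> refl_group \<Gamma>. w (v \<beta>) \<in> neg} \<subseteq> {x \<in> refl_group \<Gamma>. x \<beta> \<in> neg}"
    proof safe
      fix v assume "v \<in> refl_group \<Gamma>" "w (v \<beta>) \<in> neg"
      moreover have "inv v0 \<circ> v \<in> refl_group \<Gamma>" using rg_comp[OF inv0(1)] calculation by blast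
      ultimately show "inv v0 \<circ> v \<in> refl_group \<Gamma>" "(inv v0 \<circ> v) \<beta> \<in> neg"
        using iff winv by metis+
    qed
    show "(\<lambda>x. v0 \<circ> x) ` {x \<in> refl_group \<Gamma>. x \<beta> \<in> neg} \<subseteq> {v \<in> refl_group \<Gamma>. w (v \<beta>) \<in> neg}"
    proof safe
      fix x assume x: "x \<in> refl_group \<Gamma>" "x \<beta> \<in> neg"
      show "v0 \<circ> x \<in> refl_group \<Gamma>" using rg_comp[OF v0 x(1)] .
      show "w ((v0 \<circ> x) \<beta>) \<in> neg" using iff[OF x(1)] x(2) unfolding u_def by simp
    qed
  qed
  then show ?thesis by (rule bij_betw_same_card)
qed

lemma main_count:
  assumes G: "\<Gamma> \<subseteq> \<Delta>" and b: "\<beta> \<in> pos" "\<beta> \<in> span \<Gamma>"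
  shows "card {w \<in> refl_group \<Phi>. w \<beta> \<in> neg} * card (refl_group \<Gamma>)
       = card (refl_group \<Phi>) * card {x \<in> refl_group \<Gamma>. x \<beta> \<in> neg}"
proof -
  have GPhi: "\<Gamma> \<subseteq> \<Phi>" using G DPhi by blast
  have G0: "0 \<notin> \<Gamma>" using GPhi zPhi by blast
  have finW: "finite (refl_group \<Phi>)" using rg_finite[OF finPhi zPhi] reflPhi by blast
  have sub: "refl_group \<Gamma> \<subseteq> refl_group \<Phi>" using rg_mono GPhi by blast
  have finWG: "finite (refl_group \<Gamma>)" using finite_subset[OF sub finW] .
  define P where "P = Sigma (refl_group \<Phi>) (\<lambda>w. {v \<in> refl_group \<Gamma>. w (v \<beta>) \<in> neg})"
  have "card P = (\<Sum>w\<in>refl_group \<Phi>. card {v \<in> refl_group \<Gamma>. w (v \<beta>) \<in> neg})"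
    unfolding P_def using finW finWG by (intro card_SigmaI) auto
  also have "\<dots> = (\<Sum>w\<in>refl_group \<Phi>. card {x \<in> refl_group \<Gamma>. x \<beta> \<in> neg})"
    using key[OF G b] by (intro sum.cong) auto
  finally have c1: "card P = card (refl_group \<Phi>) * card {x \<in> refl_group \<Gamma>. x \<beta> \<in> neg}" by simp
  have "bij_betw (\<lambda>(w, v). (w \<circ> v, v)) P ({w \<in> refl_group \<Phi>. w \<beta> \<in> neg} \<times> refl_group \<Gamma>)"
  proof (rule bij_betw_byWitness[where f' = "\<lambda>(x, v). (x \<circ> inv v, v)"])
    show "\<forall>a\<in>P. (case case a of (w, v) \<Rightarrow> (w \<circ> v, v) of (x, v) \<Rightarrow> (x \<circ> inv v, v)) = a"
    proof
      fix a assume "a \<in> P"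
      then obtain w v where a: "a = (w, v)" "v \<in> refl_group \<Gamma>" unfolding P_def by blast
      show "(case case a of (w, v) \<Rightarrow> (w \<circ> v, v) of (x, v) \<Rightarrow> (x \<circ> inv v, v)) = a"
        using a rg_inv(3)[OF a(2) G0] by (simp add: comp_assoc)
    qed
    show "\<forall>a'\<in>{w \<in> refl_group \<Phi>. w \<beta> \<in> neg} \<times> refl_group \<Gamma>.
      (case case a' of (x, v) \<Rightarrow> (x \<circ> inv v, v) of (w, v) \<Rightarrow> (w \<circ> v, v)) = a'"
    proof
      fix a assume "a \<in> {w \<in> refl_group \<Phi>. w \<beta> \<in> neg} \<times> refl_group \<Gamma>"
      then obtain w v where a: "a = (w, v)" "v \<in> refl_group \<Gamma>" by blast
      show "(case case a of (x, v) \<Rightarrow> (x \<circ> inv v, v) of (w, v) \<Rightarrow> (w \<circ> v, v)) = a"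
        using a rg_inv(2)[OF a(2) G0] by (simp add: comp_assoc)
    qed
    show "(\<lambda>(w, v). (w \<circ> v, v)) ` P \<subseteq> {w \<in> refl_group \<Phi>. w \<beta> \<in> neg} \<times> refl_group \<Gamma>"
    proof safe
      fix w v assume "(w, v) \<in> P"
      then have wv: "w \<in> refl_group \<Phi>" "v \<in> refl_group \<Gamma>" "w (v \<beta>) \<in> neg" unfolding P_def by auto
      show "w \<circ> v \<in> refl_group \<Phi>" using rg_comp wv sub by blast
      show "(w \<circ> v) \<beta> \<in> neg" using wv by simp
      show "v \<in> refl_group \<Gamma>" using wv by blast
    qed
    show "(\<lambda>(x, v). (x \<circ> inv v, v)) ` ({w \<in> refl_group \<Phi>. w \<beta> \<in> neg} \<times> refl_group \<Gamma>) \<subseteq> P"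
    proof safe
      fix x v assume x: "x \<in> refl_group \<Phi>" "x \<beta> \<in> neg" "v \<in> refl_group \<Gamma>"
      have iv: "inv v \<in> refl_group \<Phi>" using rg_inv(1)[OF x(3) G0] sub by blast
      have "x \<circ> inv v \<in> refl_group \<Phi>" using rg_comp[OF x(1) iv] .
      moreover have "(x \<circ> inv v) (v \<beta>) = x \<beta>" using rg_inv(2)[OF x(3) G0] by (metis comp_apply id_apply)
      ultimately show "(x \<circ> inv v, v) \<in> P" unfolding P_def using x by simp
    qed
  qed
  then have "card P = card ({w \<in> refl_group \<Phi>. w \<beta> \<in> neg} \<times> refl_group \<Gamma>)" by (rule bij_betw_same_card)
  then have "card P = card {w \<in> refl_group \<Phi>. w \<beta> \<in> neg} * card (refl_group \<Gamma>)" by (simp add: card_cartesian_product)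
  with c1 show ?thesis by simp
qed

lemma cards_pos:
  assumes G: "\<Gamma> \<subseteq> \<Delta>"
  shows "card (refl_group \<Phi>) > 0" "card (refl_group \<Gamma>) > 0"
proof -
  have GPhi: "\<Gamma> \<subseteq> \<Phi>" using G DPhi by blast
  have finW: "finite (refl_group \<Phi>)" using rg_finite[OF finPhi zPhi] reflPhi by blast
  have sub: "refl_group \<Gamma> \<subseteq> refl_group \<Phi>" using rg_mono GPhi by blast
  have finWG: "finite (refl_group \<Gamma>)" using finite_subset[OF sub finW] .
  show "card (refl_group \<Phi>) > 0" using finW refl_group.id_in card_gt_0_iff by blast
  show "card (refl_group \<Gamma>) > 0" using finWG refl_group.id_in card_gt_0_iff by blast
qed

end

theorem corollary3p7:
  fixes \<Phi> \<Delta> \<Gamma> :: "'a::euclidean_space set" and \<beta> :: 'a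
  assumes "crystallographic_root_system \<Phi>"
    and "simple_system \<Phi> \<Delta>"
    and "\<Gamma> \<subseteq> \<Delta>"
    and "\<beta> \<in> pos_roots \<Phi> \<Delta> \<inter> span \<Gamma>"
  shows "real (card {w \<in> weyl_group \<Phi>. w \<beta> \<in> neg_roots \<Phi> \<Delta>}) / real (card (weyl_group \<Phi>))
       = real (card {w \<in> refl_group \<Gamma>. w \<beta> \<in> neg_roots \<Phi> \<Delta>}) / real (card (refl_group \<Gamma>))"
proof -
  interpret RS \<Phi> \<Delta> using assms(1,2) by unfold_locales
  have m: "card {w \<in> refl_group \<Phi>. w \<beta> \<in> neg_roots \<Phi> \<Delta>} * card (refl_group \<Gamma>)
       = card (refl_group \<Phi>) * card {x \<in> refl_group \<Gamma>. x \<beta> \<in> neg_roots \<Phi> \<Delta>}"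
    using main_count[OF assms(3)] assms(4) by blast
  have p: "card (refl_group \<Phi>) > 0" "card (refl_group \<Gamma>) > 0" using cards_pos[OF assms(3)] by auto
  have m': "real (card {w \<in> refl_group \<Phi>. w \<beta> \<in> neg_roots \<Phi> \<Delta>}) * real (card (refl_group \<Gamma>))
       = real (card (refl_group \<Phi>)) * real (card {x \<in> refl_group \<Gamma>. x \<beta> \<in> neg_roots \<Phi> \<Delta>})"
    using arg_cong[OF m, of real] by (simp only: of_nat_mult)
  have "real (card (refl_group \<Phi>)) \<noteq> 0" "real (card (refl_group \<Gamma>)) \<noteq> 0" using p by auto
  then show ?thesis
    by (subst frac_eq_eq) (simp_all, use m' in \<open>simp only: mult.commute\<close>)
qed


end
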